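(* Let $w$ be a planar word in $\Sigma_{0,1,n}$ and let $k\in\{1,\dots,n\}$. Then: (i) $w$ is squarefree, i.e. its reduced word has no two consecutive equal letters; (ii) $w\notin(\overline t_n\overline t_{n-1}\cdots\overline t_{k+1}t_k{\star})\setminus\{(t_{k+1}\cdots t_n)^{-1}t_k(t_{k+1}\cdots t_n)\}$; (iii) $w\notin(t_1t_2\cdots t_{k-1}\overline t_k{\star})$.
   Context: $\Sigma_{0,1,n}$ is the free group on $t_1,\dots,t_n$; write $\overline t_k=t_k^{-1}$. For $v\in\Sigma_{0,1,n}$, $(v{\star})$ is the set of elements whose reduced word begins with the reduced word of $v$. Empty products equal $1$. Let $A$ be the set of formal symbols $\overline z_1,t_1,\overline t_1,\dots,t_n,\overline t_n,z_1$, totally ordered by $\overline z_1<t_1<\overline t_1<\dots<t_n<\overline t_n<z_1$. For a reduced word $a_1\cdots a_m$ (with $a_i\in\{t_k^{\pm1}\}$), its Whitehead expansion is $(c_1,\dots,c_{2m+2})=(\overline z_1,a_1,\overline a_1,\dots,a_m,\overline a_m,z_1)$. Two $2$-element sets $\{a,b\},\{c,d\}$ of integers are nested if $a,b,c,d$ are distinct and either both or neither of $c,d$ lie strictly between $a$ and $b$. A family of such sets is nested if every two distinct members are nested. A $2M$-tuple $(c_1,\dots,c_{2M})$ of elements of $A$ is planar if there is a permutation $\pi$ of $\{1,\dots,2M\}$ with three properties: - $\pi(i)<\pi(j)$ implies $c_i\le c_j$; - the family $\{\{\pi(2i-1),\pi(2i)\}\}_{1\le i\le M}$ is nested; - the family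 $\{\{\pi(2i),\pi(2i+1)\}\}_{1\le i\le M-1}$ is nested. $w$ is a planar word if the Whitehead expansion of its reduced word is planar. *)

theory Defs
  imports Main
begin

text \<open>Letters of the free group on t_1..t_n: (k, True) is t_k, (k, False) is its inverse.
 Elements of the free group are represented by their (unique) reduced words.\<close>

type_synonym letter = "nat \<times> bool"

definition inv_letter :: "letter \<Rightarrow> letter" where
  "inv_letter a = (fst a, \<not> snd a)"

definition reduced :: "letter list \<Rightarrow> bool" where
  "reduced w \<longleftrightarrow> (\<forall>i. Suc i < length w \<longrightarrow> w ! Suc i \<noteq> inv_letter (w ! i))"

definition word_in :: "nat \<Rightarrow> letter list \<Rightarrow> bool" where
  "word_in n w \<longleftrightarrow> (\<forall>a\<in>set w. 1 \<le> fst a \<and> fst a \<le> n)"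

definition free_word :: "nat \<Rightarrow> letter list \<Rightarrow> bool" where
  "free_word n w \<longleftrightarrow> word_in n w \<and> reduced w"

definition tt :: "nat \<Rightarrow> letter" where "tt k = (k, True)"
definition tbar :: "nat \<Rightarrow> letter" where "tbar k = (k, False)"

datatype sym = Zbar | Tl letter | Z

text \<open>Rank realising the total order zbar_1 < t_1 < tbar_1 < ... < t_n < tbar_n < z_1.\<close>
fun sym_rank :: "nat \<Rightarrow> sym \<Rightarrow> nat" where
  "sym_rank n Zbar = 0"
| "sym_rank n (Tl (k, b)) = (if b then 2*k - 1 else 2*k)"
| "sym_rank n Z = 2*n + 1"

definition sym_le :: "nat \<Rightarrow> sym \<Rightarrow> sym \<Rightarrow> bool" where
  "sym_le n x y \<longleftrightarrow> sym_rank n x \<le> sym_rank n y"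

definition whitehead :: "letter list \<Rightarrow> sym list" where
  "whitehead w = Zbar # concat (map (\<lambda>a. [Tl a, Tl (inv_letter a)]) w) @ [Z]"

definition strictly_between :: "int \<Rightarrow> int \<Rightarrow> int \<Rightarrow> bool" where
  "strictly_between a b x \<longleftrightarrow> min a b < x \<and> x < max a b"

definition nested_pair :: "int \<times> int \<Rightarrow> int \<times> int \<Rightarrow> bool" where
  "nested_pair p q \<longleftrightarrow> (let (a, b) = p; (c, d) = q in
     distinct [a, b, c, d] \<and>
     (strictly_between a b c \<longleftrightarrow> strictly_between a b d))"

definition nested_family :: "nat set \<Rightarrow> (nat \<Rightarrow> int \<times> int) \<Rightarrow> bool" where
  "nested_family I F \<longleftrightarrow>
     (\<forall>i\<in>I. \<forall>j\<in>I. {fst (F i), snd (F i)} \<noteq> {fst (F j), snd (F j)} \<longrightarrow> nested_pair (F i) (F j))"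

text \<open>Planarity of a 2M-tuple c (given as a list, c_i = c ! (i-1)).\<close>
definition planar_tuple :: "nat \<Rightarrow> sym list \<Rightarrow> bool" where
  "planar_tuple n c \<longleftrightarrow> (\<exists>M. length c = 2*M \<and> (\<exists>\<pi> :: nat \<Rightarrow> nat.
     bij_betw \<pi> {1..2*M} {1..2*M} \<and>
     (\<forall>i\<in>{1..2*M}. \<forall>j\<in>{1..2*M}. \<pi> i < \<pi> j \<longrightarrow> sym_le n (c ! (i - 1)) (c ! (j - 1))) \<and>
     nested_family {1..M} (\<lambda>i. (int (\<pi> (2*i - 1)), int (\<pi> (2*i)))) \<and>
     nested_family {1..M-1} (\<lambda>i. (int (\<pi> (2*i)), int (\<pi> (2*i + 1))))))"

definition planar_word :: "nat \<Rightarrow> letter list \<Rightarrow> bool" where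
  "planar_word n w \<longleftrightarrow> planar_tuple n (whitehead w)"

definition squarefree_word :: "letter list \<Rightarrow> bool" where
  "squarefree_word w \<longleftrightarrow> (\<forall>i. Suc i < length w \<longrightarrow> w ! i \<noteq> w ! Suc i)"

text \<open>(v*) for reduced v: reduced words starting with v.\<close>
definition starts_with :: "letter list \<Rightarrow> letter list \<Rightarrow> bool" where
  "starts_with v w \<longleftrightarrow> (\<exists>u. w = v @ u)"

end

theory Submission imports Defs begin

lemma concat_pairs_len: "length (concat (map (\<lambda>a. [g a, h a]) w)) = 2 * length w"
  by (induction w) auto

lemma concat_pairs_nth0: "q < length w \<Longrightarrow> concat (map (\<lambda>a. [g a, h a]) w) ! (2*q) = g (w!q)"
  by (induction w arbitrary: q) (auto simp: nth_Cons split: nat.splits)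

lemma concat_pairs_nth1: "q < length w \<Longrightarrow> concat (map (\<lambda>a. [g a, h a]) w) ! (Suc (2*q)) = h (w!q)"
  by (induction w arbitrary: q) (auto simp: nth_Cons split: nat.splits)

lemma whitehead_len: "length (whitehead w) = 2 * (length w + 1)"
  by (simp add: whitehead_def concat_pairs_len)

lemma wh0: "whitehead w ! 0 = Zbar" by (simp add: whitehead_def)

lemma whX: "1 \<le> i \<Longrightarrow> i \<le> length w \<Longrightarrow> whitehead w ! (2*i - 1) = Tl (w!(i-1))"
proof -
  assume a: "1 \<le> i" "i \<le> length w"
  have e: "2*i - 1 = Suc (2*(i-1))" using a by simp
  show ?thesis unfolding whitehead_def e using a
    by (simp add: nth_append concat_pairs_len concat_pairs_nth0)
qed

lemma whY: "1 \<le> i \<Longrightarrow> i \<le> length w \<Longrightarrow> whitehead w ! (2*i) = Tl (inv_letter (w!(i-1)))"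
proof -
  assume a: "1 \<le> i" "i \<le> length w"
  have e: "2*i = Suc (Suc (2*(i-1)))" using a by simp
  show ?thesis unfolding whitehead_def e using a
    by (simp add: nth_append concat_pairs_len concat_pairs_nth1)
qed

lemma whZ: "whitehead w ! (2*length w + 1) = Z"
  by (simp add: whitehead_def nth_append concat_pairs_len)

definition sbn :: "nat \<Rightarrow> nat \<Rightarrow> nat \<Rightarrow> bool" where
  "sbn p q x \<longleftrightarrow> min p q < x \<and> x < max p q"

lemma sb_int: "strictly_between (int p) (int q) (int x) = sbn p q x"
  by (auto simp: strictly_between_def sbn_def min_def max_def)

definition lr :: "letter \<Rightarrow> nat" where
  "lr a = (if snd a then 2 * fst a - 1 else 2 * fst a)"

lemma rank_Tl: "sym_rank n (Tl a) = lr a"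
  by (cases a) (simp add: lr_def)

lemma lr_inj: "1 \<le> fst a \<Longrightarrow> 1 \<le> fst b \<Longrightarrow> lr a = lr b \<Longrightarrow> a = b"
  by (cases a; cases b) (auto simp: lr_def split: if_splits; presburger)

lemma lr_inv: "lr (inv_letter a) = (if snd a then 2 * fst a else 2 * fst a - 1)"
  by (simp add: lr_def inv_letter_def)

lemma inv_inv[simp]: "inv_letter (inv_letter a) = a"
  by (simp add: inv_letter_def)

lemma fst_inv[simp]: "fst (inv_letter a) = fst a"
  by (simp add: inv_letter_def)

lemma cfg1: "sbn x y x' \<Longrightarrow> sbn x y y' \<Longrightarrow> (x<y \<longleftrightarrow> s) \<Longrightarrow> (x'<y' \<longleftrightarrow> s) \<Longrightarrow> distinct [x,y,x',y'] \<Longrightarrow> sbn y x' y'"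
  by (cases s) (auto simp: sbn_def)
lemma cfg2: "sbn y x' x'' \<Longrightarrow> (x'<y \<longleftrightarrow> s) \<Longrightarrow> (x'<y' \<longleftrightarrow> s) \<Longrightarrow> (x''<y' \<longleftrightarrow> s) \<Longrightarrow> distinct [y,x',x'',y'] \<Longrightarrow> sbn x' y' x''"
  by (cases s) (auto simp: sbn_def)
lemma lenlt: "sbn a b c \<Longrightarrow> sbn a b d \<Longrightarrow> max c d - min c d < max a b - (min a b :: nat)"
  by (auto simp: sbn_def min_def max_def)
lemma cfg3: "\<not> sbn x y x' \<Longrightarrow> \<not> sbn x y y' \<Longrightarrow> (x<y \<longleftrightarrow> s) \<Longrightarrow> (x'<y \<longleftrightarrow> s) \<Longrightarrow> (x<y' \<longleftrightarrow> s) \<Longrightarrow> (x'<y' \<longleftrightarrow> s)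
   \<Longrightarrow> distinct [x,y,x',y'] \<Longrightarrow> sbn x' y' x \<and> sbn x' y' y \<and> sbn y x' x"
  by (cases s) (auto simp: sbn_def)
lemma cfg4: "sbn y x' y0 \<Longrightarrow> (x<y0 \<longleftrightarrow> s) \<Longrightarrow> (x<y \<longleftrightarrow> s) \<Longrightarrow> (x'<y \<longleftrightarrow> s) \<Longrightarrow> distinct [x,y,x',y0] \<Longrightarrow> sbn x y y0"
  by (cases s) (auto simp: sbn_def)

locale PS =
  fixes n :: nat and w :: "letter list" and p :: "nat \<Rightarrow> nat"
  assumes fw: "free_word n w"
  and bij: "bij_betw p {1..2*(length w+1)} {1..2*(length w+1)}"
  and mono: "\<forall>i\<in>{1..2*(length w+1)}. \<forall>j\<in>{1..2*(length w+1)}. p i < p j \<longrightarrow> sym_le n (whitehead w ! (i - 1)) (whitehead w ! (j - 1))"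
  and nf1: "nested_family {1..length w+1} (\<lambda>i. (int (p (2*i - 1)), int (p (2*i))))"
  and nf2: "nested_family {1..length w+1-1} (\<lambda>i. (int (p (2*i)), int (p (2*i + 1))))"
begin

abbreviation m where "m \<equiv> length w"
abbreviation X where "X i \<equiv> p (2*i)"
abbreviation Y where "Y i \<equiv> p (Suc (2*i))"
abbreviation II where "II \<equiv> {1..2*(length w+1)}"

definition rk :: "nat \<Rightarrow> nat" where "rk a = sym_rank n (whitehead w ! (a - 1))"

lemma rkX: "1 \<le> i \<Longrightarrow> i \<le> m \<Longrightarrow> rk (2*i) = lr (w!(i-1))"
  unfolding rk_def using whX[of i w] by (simp add: rank_Tl)

lemma rkY: "1 \<le> i \<Longrightarrow> i \<le> m \<Longrightarrow> rk (Suc (2*i)) = lr (inv_letter (w!(i-1)))"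
  unfolding rk_def using whY[of i w] by (simp add: rank_Tl)

lemma rkY0: "rk (Suc (2*0)) = 0"
  by (simp add: rk_def wh0)

lemma rkXm: "rk (2*(Suc m)) = 2*n+1"
proof -
  have "2*Suc m - 1 = 2*m+1" by simp
  then show ?thesis using whZ[of w] by (simp add: rk_def)
qed

lemma ordR: "a \<in> II \<Longrightarrow> b \<in> II \<Longrightarrow> rk a < rk b \<Longrightarrow> p a < p b"
proof -
  assume a: "a \<in> II" "b \<in> II" "rk a < rk b"
  then have "a \<noteq> b" by auto
  then have "p a \<noteq> p b" using bij a unfolding bij_betw_def inj_on_def by blast
  moreover have "p b < p a \<longrightarrow> sym_le n (whitehead w ! (b-1)) (whitehead w ! (a-1))"
    using mono a(1,2) by blast
  then have "\<not> p b < p a" using a(3) by (auto simp: sym_le_def rk_def)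
  ultimately show ?thesis by simp
qed

lemma ordP: "a \<in> II \<Longrightarrow> b \<in> II \<Longrightarrow> p a < p b \<Longrightarrow> rk a \<le> rk b"
proof -
  assume a: "a \<in> II" "b \<in> II" "p a < p b"
  have "p a < p b \<longrightarrow> sym_le n (whitehead w ! (a-1)) (whitehead w ! (b-1))"
    using mono a(1,2) by blast
  then show ?thesis using a(3) by (auto simp: sym_le_def rk_def)
qed

lemma injp: "inj_on p II" using bij by (simp add: bij_betw_def)

lemma injP: "a \<in> II \<Longrightarrow> b \<in> II \<Longrightarrow> a \<noteq> b \<Longrightarrow> p a \<noteq> p b"
  using bij unfolding bij_betw_def inj_on_def by blast

lemma up: "i \<in> {1..m+1} \<Longrightarrow> i' \<in> {1..m+1} \<Longrightarrow> i \<noteq> i' \<Longrightarrow>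
   (sbn (Y (i-1)) (X i) (Y (i'-1)) \<longleftrightarrow> sbn (Y (i-1)) (X i) (X i'))"
proof -
  assume a: "i \<in> {1..m+1}" "i' \<in> {1..m+1}" "i \<noteq> i'"
  have e1: "Suc (2*(i-1)) = 2*i - 1" "Suc (2*(i'-1)) = 2*i' - 1" using a by auto
  have d: "distinct [Y (i-1), X i, Y (i'-1), X i']"
    using a by (auto simp: inj_on_eq_iff[OF injp])
  have e2: "p (2*i-1) = Y (i-1)" "p (2*i'-1) = Y (i'-1)" using e1 by simp_all
  have "{int (p (2*i-1)), int (p (2*i))} \<noteq> {int (p (2*i'-1)), int (p (2*i'))}"
    using d unfolding e2 by (auto simp: doubleton_eq_iff)
  then have "nested_pair (int (p (2*i - 1)), int (p (2*i))) (int (p (2*i' - 1)), int (p (2*i')))"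
    using nf1 a unfolding nested_family_def by auto
  then show ?thesis unfolding nested_pair_def e2 by (simp add: sb_int)
qed

lemma lo: "i \<in> {1..m} \<Longrightarrow> i' \<in> {1..m} \<Longrightarrow> i \<noteq> i' \<Longrightarrow>
   (sbn (X i) (Y i) (X i') \<longleftrightarrow> sbn (X i) (Y i) (Y i'))"
proof -
  assume a: "i \<in> {1..m}" "i' \<in> {1..m}" "i \<noteq> i'"
  have d: "distinct [X i, Y i, X i', Y i']"
    using a by (auto simp: inj_on_eq_iff[OF injp])
  have "{int (X i), int (Y i)} \<noteq> {int (X i'), int (Y i')}"
    using d by (auto simp: doubleton_eq_iff)
  then have "nested_pair (int (X i), int (Y i)) (int (X i'), int (Y i'))"
    using nf2 a unfolding nested_family_def by auto
  then show ?thesis unfolding nested_pair_def by (simp add: sb_int)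
qed

lemma letter_ok: "1 \<le> i \<Longrightarrow> i \<le> m \<Longrightarrow> 1 \<le> fst (w!(i-1)) \<and> fst (w!(i-1)) \<le> n"
proof -
  assume a: "1 \<le> i" "i \<le> m"
  then have "w!(i-1) \<in> set w" by (intro nth_mem) simp
  then show ?thesis using fw unfolding free_word_def word_in_def by blast
qed

lemma red: "1 \<le> i \<Longrightarrow> i < m \<Longrightarrow> w!i \<noteq> inv_letter (w!(i-1))"
proof -
  assume a: "1 \<le> i" "i < m"
  have "Suc (i-1) < m" using a by simp
  then have "w!Suc (i-1) \<noteq> inv_letter (w!(i-1))" using fw unfolding free_word_def reduced_def by blast
  then show ?thesis using a by simp
qed

definition len :: "nat \<Rightarrow> nat" where "len i = max (X i) (Y i) - min (X i) (Y i)"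
definition mu :: "nat \<Rightarrow> nat" where "mu i = min (len i) (len (Suc i))"

lemma mX: "1 \<le> i \<Longrightarrow> i \<le> Suc m \<Longrightarrow> 2*i \<in> II" by auto
lemma mY: "i \<le> m \<Longrightarrow> Suc (2*i) \<in> II" by auto

lemma sq_step:
  assumes i1: "1 \<le> i" and im: "i < m" and sq: "w!(i-1) = w!i"
  shows "\<exists>i'. 1 \<le> i' \<and> i' < m \<and> w!(i'-1) = w!i' \<and> mu i' < mu i"
proof -
  obtain j b where l: "w!(i-1) = (j,b)" by (cases "w!(i-1)")
  have j: "1 \<le> j" "j \<le> n" using letter_ok[of i] i1 im l by auto
  define A where "A = lr (j,b)"
  define B where "B = lr (inv_letter (j,b))"
  have ABc: "(A = 2*j-1 \<and> B = 2*j) \<or> (A = 2*j \<and> B = 2*j-1)"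
    using j by (auto simp: A_def B_def lr_def inv_letter_def)
  have AB: "min A B = 2*j-1" "max A B = 2*j" "A \<noteq> B" using ABc j by auto
  have l2: "w!(Suc i - 1) = (j,b)" using sq l by simp
  have rX1: "rk (2*i) = A" using rkX[of i] i1 im l by (simp add: A_def)
  have rX2: "rk (2*Suc i) = A" using rkX[of "Suc i"] i1 im l2 by (simp add: A_def)
  have rY1: "rk (Suc (2*i)) = B" using rkY[of i] i1 im l by (simp add: B_def)
  have rY2: "rk (Suc (2*Suc i)) = B" using rkY[of "Suc i"] i1 im l2 by (simp add: B_def)
  have side: "\<And>a c. a \<in> II \<Longrightarrow> c \<in> II \<Longrightarrow> rk a = A \<Longrightarrow> rk c = B \<Longrightarrow> (p a < p c \<longleftrightarrow> A < B)"
  proof -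
    fix a c assume h: "a \<in> II" "c \<in> II" "rk a = A" "rk c = B"
    show "(p a < p c \<longleftrightarrow> A < B)"
    proof
      assume "p a < p c" then have "rk a \<le> rk c" using ordP h by blast
      then show "A < B" using h AB by simp
    next
      assume "A < B" then show "p a < p c" using ordR h by simp
    qed
  qed
  have s1: "X i < Y i \<longleftrightarrow> A < B" using side[of "2*i" "Suc (2*i)"] rX1 rY1 i1 im by simp
  have s2: "X (Suc i) < Y i \<longleftrightarrow> A < B" using side[of "2*Suc i" "Suc (2*i)"] rX2 rY1 i1 im by simp
  have s3: "X i < Y (Suc i) \<longleftrightarrow> A < B" using side[of "2*i" "Suc (2*Suc i)"] rX1 rY2 i1 im by simp
  have s4: "X (Suc i) < Y (Suc i) \<longleftrightarrow> A < B" using side[of "2*Suc i" "Suc (2*Suc i)"] rX2 rY2 i1 im by simp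
  have dist: "distinct [X i, Y i, X (Suc i), Y (Suc i)]"
    using i1 im by (auto simp: inj_on_eq_iff[OF injp])
  have lo1: "sbn (X i) (Y i) (X (Suc i)) \<longleftrightarrow> sbn (X i) (Y i) (Y (Suc i))"
    using lo[of i "Suc i"] i1 im by simp
  show ?thesis
  proof (cases "sbn (X i) (Y i) (X (Suc i))")
    case True
    then have inner: "sbn (X i) (Y i) (Y (Suc i))" using lo1 by simp
    have "sbn (Y i) (X (Suc i)) (Y (Suc i))"
      using dist by (intro cfg1[OF True inner s1 s4]) auto
    moreover have "sbn (Y (Suc i - 1)) (X (Suc i)) (Y (Suc (Suc i) - 1)) \<longleftrightarrow> sbn (Y (Suc i - 1)) (X (Suc i)) (X (Suc (Suc i)))"
      using up[of "Suc i" "Suc (Suc i)"] i1 im by simp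
    ultimately have b3: "sbn (Y i) (X (Suc i)) (X (Suc (Suc i)))" by simp
    have m3: "2 * Suc (Suc i) \<in> II" using im by simp
    have r3: "min A B \<le> rk (2 * Suc (Suc i)) \<and> rk (2 * Suc (Suc i)) \<le> max A B"
    proof (cases "A < B")
      case True
      then have "Y i > X (Suc i)" using s2 by simp
      then have "X (Suc i) < X (Suc (Suc i))" "X (Suc (Suc i)) < Y i" using b3 by (auto simp: sbn_def)
      then show ?thesis using ordP[OF mX[of "Suc i"] m3] ordP[OF m3 mY[of i]] rX2 rY1 i1 im True by auto
    next
      case False
      then have "Y i < X (Suc i)" using s2 dist by auto
      then have "X (Suc (Suc i)) < X (Suc i)" "Y i < X (Suc (Suc i))" using b3 by (auto simp: sbn_def)
      then show ?thesis using ordP[OF m3 mX[of "Suc i"]] ordP[OF mY[of i] m3] rX2 rY1 i1 im False by auto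
    qed
    have i2: "Suc (Suc i) \<le> m"
    proof (rule ccontr)
      assume "\<not> Suc (Suc i) \<le> m"
      then have "Suc (Suc i) = Suc m" using im by simp
      then have "rk (2 * Suc (Suc i)) = 2*n+1" using rkXm by simp
      then show False using r3 AB j by simp
    qed
    have r3': "rk (2 * Suc (Suc i)) = lr (w!(Suc i))" using rkX[of "Suc (Suc i)"] i2 by simp
    have lok: "1 \<le> fst (w!(Suc i))" using letter_ok[of "Suc (Suc i)"] i2 by simp
    have nred: "w!(Suc i) \<noteq> inv_letter (j,b)" using red[of "Suc i"] i2 l2 by simp
    have "lr (w!(Suc i)) = A \<or> lr (w!(Suc i)) = B" using r3 r3' AB ABc by linarith
    moreover have "lr (w!(Suc i)) \<noteq> B"
      using lr_inj[of "w!(Suc i)" "inv_letter (j,b)"] lok nred j by (auto simp: B_def)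
    ultimately have "lr (w!(Suc i)) = A" by blast
    then have nl: "w!(Suc i) = (j,b)" using lr_inj[of "w!(Suc i)" "(j,b)"] lok j by (auto simp: A_def)
    have rX3: "rk (2*Suc (Suc i)) = A" using r3' nl by (simp add: A_def)
    have s5: "X (Suc (Suc i)) < Y (Suc i) \<longleftrightarrow> A < B" using side[OF m3 mY[of "Suc i"]] rX3 rY2 im by simp
    have s6: "X (Suc (Suc i)) < Y i \<longleftrightarrow> A < B" using side[OF m3 mY[of "i"]] rX3 rY1 im by simp
    have d3: "distinct [X i, Y i, X (Suc i), Y (Suc i), X (Suc (Suc i)), Y (Suc (Suc i))]"
      using i1 i2 by (auto simp: inj_on_eq_iff[OF injp])
    have "sbn (X (Suc i)) (Y (Suc i)) (X (Suc (Suc i)))"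
      using d3 by (intro cfg2[OF b3 s2 s4 s5]) auto
    moreover have "sbn (X (Suc i)) (Y (Suc i)) (X (Suc (Suc i))) \<longleftrightarrow> sbn (X (Suc i)) (Y (Suc i)) (Y (Suc (Suc i)))"
      using lo[of "Suc i" "Suc (Suc i)"] i1 i2 by simp
    ultimately have "sbn (X (Suc i)) (Y (Suc i)) (Y (Suc (Suc i)))" by simp
    with \<open>sbn (X (Suc i)) (Y (Suc i)) (X (Suc (Suc i)))\<close>
    have "len (Suc (Suc i)) < len (Suc i)" unfolding len_def by (intro lenlt)
    moreover have "len (Suc i) < len i" using True inner unfolding len_def by (rule lenlt)
    ultimately have "mu (Suc i) < mu i" by (auto simp: mu_def)
    then show ?thesis using i1 i2 nl l2 by (intro exI[of _ "Suc i"]) simp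
  next
    case False
    then have outer: "\<not> sbn (X i) (Y i) (Y (Suc i))" using lo1 by simp
    have c3: "sbn (X (Suc i)) (Y (Suc i)) (X i) \<and> sbn (X (Suc i)) (Y (Suc i)) (Y i) \<and> sbn (Y i) (X (Suc i)) (X i)"
      using cfg3[OF False outer s1 s2 s3 s4 dist] .
    then have inXi: "sbn (Y i) (X (Suc i)) (X i)" by simp
    have "sbn (Y (i - 1)) (X i) (Y (Suc i - 1)) \<longleftrightarrow> sbn (Y (i - 1)) (X i) (X (Suc i))"
      using up[of i "Suc i"] i1 im by simp
    have u: "sbn (Y (Suc i - 1)) (X (Suc i)) (Y (i - 1)) \<longleftrightarrow> sbn (Y (Suc i - 1)) (X (Suc i)) (X i)"
      using up[of "Suc i" i] i1 im by simp
    have b0: "sbn (Y i) (X (Suc i)) (Y (i-1))" using u inXi by simp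
    have m0: "Suc (2*(i-1)) \<in> II" using im by simp
    have r0: "min A B \<le> rk (Suc (2*(i-1))) \<and> rk (Suc (2*(i-1))) \<le> max A B"
    proof (cases "A < B")
      case True
      then have "Y i > X (Suc i)" using s2 by simp
      then have "X (Suc i) < Y (i-1)" "Y (i-1) < Y i" using b0 by (auto simp: sbn_def)
      then show ?thesis using ordP[OF mX[of "Suc i"] m0] ordP[OF m0 mY[of i]] rX2 rY1 i1 im True by auto
    next
      case False
      then have "Y i < X (Suc i)" using s2 dist by auto
      then have "Y (i-1) < X (Suc i)" "Y i < Y (i-1)" using b0 by (auto simp: sbn_def)
      then show ?thesis using ordP[OF m0 mX[of "Suc i"]] ordP[OF mY[of i] m0] rX2 rY1 i1 im False by auto
    qed
    have i0: "2 \<le> i"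
    proof (rule ccontr)
      assume "\<not> 2 \<le> i"
      then have "i = 1" using i1 by simp
      then have "rk (Suc (2*(i-1))) = 0" using rkY0 by simp
      then show False using r0 AB j by simp
    qed
    have r0': "rk (Suc (2*(i-1))) = lr (inv_letter (w!(i-2)))"
      using rkY[of "i-1"] i0 im by (simp add: numeral_2_eq_2)
    have lok: "1 \<le> fst (w!(i-2))" using letter_ok[of "i-1"] i0 im by (simp add: numeral_2_eq_2)
    have nred: "w!(i-1) \<noteq> inv_letter (w!(i-2))" using red[of "i-1"] i0 im by (simp add: numeral_2_eq_2)
    have "lr (inv_letter (w!(i-2))) = A \<or> lr (inv_letter (w!(i-2))) = B" using r0 r0' AB ABc by linarith
    moreover have "lr (inv_letter (w!(i-2))) \<noteq> A"
      using lr_inj[of "inv_letter (w!(i-2))" "(j,b)"] lok nred j l by (auto simp: A_def)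
    ultimately have "lr (inv_letter (w!(i-2))) = B" by blast
    then have "inv_letter (w!(i-2)) = inv_letter (j,b)"
      using lr_inj[of "inv_letter (w!(i-2))" "inv_letter (j,b)"] lok j by (auto simp: B_def)
    then have nl: "w!(i-2) = (j,b)" by (metis inv_inv)
    have rY0: "rk (Suc (2*(i-1))) = B" using r0' nl by (simp add: B_def)
    have s5: "X i < Y (i-1) \<longleftrightarrow> A < B" using side[OF mX[of i] m0] rX1 rY0 i1 im by simp
    have s6: "X (Suc i) < Y (i-1) \<longleftrightarrow> A < B" using side[OF mX[of "Suc i"] m0] rX2 rY0 im by simp
    have mm: "2*(i-1) \<in> II" "2*(i-1) \<noteq> 2*i" "2*(i-1) \<noteq> Suc (2*i)" "2*(i-1) \<noteq> 2*Suc i"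
       "2*(i-1) \<noteq> Suc (2*Suc i)" "2*(i-1) \<noteq> Suc (2*(i-1))" using i0 im by auto
    have d3: "distinct [X i, Y i, X (Suc i), Y (Suc i), X (i-1), Y (i-1)]"
      using i0 im mm by (auto simp: inj_on_eq_iff[OF injp])
    have "sbn (X i) (Y i) (Y (i-1))"
      using d3 by (intro cfg4[OF b0 s5 s1 s2]) auto
    moreover have "sbn (X i) (Y i) (X (i-1)) \<longleftrightarrow> sbn (X i) (Y i) (Y (i-1))"
      using i0 im by (intro lo) auto
    ultimately have "sbn (X i) (Y i) (X (i-1))" by simp
    with \<open>sbn (X i) (Y i) (Y (i-1))\<close>
    have "len (i-1) < len i" unfolding len_def by (intro lenlt)
    moreover have "len i < len (Suc i)" using c3 unfolding len_def by (intro lenlt) auto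
    ultimately have "mu (i-1) < mu i" using i0 by (auto simp: mu_def)
    moreover have "w!(i-1-1) = w!(i-1)" using nl l i0 by (simp add: numeral_2_eq_2)
    moreover have "1 \<le> i - 1" "i - 1 < m" using i0 im by auto
    ultimately show ?thesis by (intro exI[of _ "i-1"]) simp
  qed
qed

lemma squarefree: "squarefree_word w"
proof -
  have "\<forall>i. mu i = N \<longrightarrow> 1 \<le> i \<longrightarrow> i < m \<longrightarrow> w!(i-1) \<noteq> w!i" for N
  proof (induction N rule: less_induct)
    case (less N)
    show ?case
    proof (intro allI impI notI)
      fix i assume h: "mu i = N" "1 \<le> i" "i < m" "w!(i-1) = w!i"
      then obtain i' where "1 \<le> i'" "i' < m" "w!(i'-1) = w!i'" "mu i' < mu i"
        using sq_step by blast
      then show False using less h by blast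
    qed
  qed
  note H = this
  show ?thesis unfolding squarefree_word_def
  proof (intro allI impI)
    fix i assume "Suc i < m"
    then have "w!(Suc i - 1) \<noteq> w!(Suc i)" using H[of "mu (Suc i)", rule_format, of "Suc i"] by simp
    then show "w!i \<noteq> w!Suc i" by simp
  qed
qed

lemma sqf: "1 \<le> i \<Longrightarrow> i < m \<Longrightarrow> w!i \<noteq> w!(i-1)"
  using squarefree unfolding squarefree_word_def
  by (metis One_nat_def Suc_pred le_less_trans less_le_trans zero_less_one)

lemma part3:
  assumes k1: "1 \<le> k" and km: "k \<le> m"
    and wl: "\<And>i. 1 \<le> i \<Longrightarrow> i < k \<Longrightarrow> w!(i-1) = (i,True)"
    and wk: "w!(k-1) = (k,False)"
  shows False
proof -
  have kn: "k \<le> n" using letter_ok[of k] k1 km wk by simp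
  have rYj: "rk (Suc (2*(j-1))) = 2*(j-1)" if "1 \<le> j" "j \<le> k" for j
  proof (cases "j = 1")
    case True then show ?thesis using rkY0 by simp
  next
    case False
    then have "w!(j-1-1) = (j-1,True)" using wl[of "j-1"] that by simp
    then show ?thesis using rkY[of "j-1"] that False km
      by (simp add: lr_def inv_letter_def)
  qed
  have rXj: "rk (2*j) = 2*j-1" if "1 \<le> j" "j < k" for j
    using rkX[of j] wl[of j] that km by (simp add: lr_def)
  have rXk: "rk (2*k) = 2*k" using rkX[of k] wk k1 km by (simp add: lr_def)
  have main: "\<forall>s. k \<le> s \<longrightarrow> s \<le> m \<longrightarrow> w!(s-1) = (j,False) \<longrightarrow> Y (j-1) < Y s \<longrightarrow> Y s < X j
      \<longrightarrow> 1 \<le> j \<longrightarrow> j \<le> k \<longrightarrow> False" for j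
  proof (induction j)
    case 0 then show ?case by simp
  next
    case (Suc j)
    show ?case
    proof (intro allI impI)
      fix s assume ks: "k \<le> s" and sm: "s \<le> m" and ws: "w!(s-1) = (Suc j,False)"
        and y1: "Y (Suc j - 1) < Y s" and y2: "Y s < X (Suc j)" and j1: "1 \<le> Suc j" and jk: "Suc j \<le> k"
      have "sbn (Y (Suc j - 1)) (X (Suc j)) (Y (Suc s - 1)) \<longleftrightarrow> sbn (Y (Suc j - 1)) (X (Suc j)) (X (Suc s))"
        using jk ks sm km by (intro up) auto
      then have b: "Y j < X (Suc s)" "X (Suc s) < X (Suc j)" using y1 y2 by (auto simp: sbn_def)
      have mS: "2 * Suc s \<in> II" using sm by simp
      have mYj: "Suc (2*j) \<in> II" using jk km by simp
      have mXj: "2 * Suc j \<in> II" using jk km by simp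
      have rXSj: "rk (2 * Suc j) \<le> 2 * Suc j"
        using rXj[of "Suc j"] rXk jk by (cases "Suc j = k") auto
      have lo1: "2*j \<le> rk (2 * Suc s)" using ordP[OF mYj mS] b rYj[of "Suc j"] jk by simp
      have hi1: "rk (2 * Suc s) \<le> 2 * Suc j" using ordP[OF mS mXj] b rXSj by simp
      have sm': "s < m"
      proof (rule ccontr)
        assume "\<not> s < m" then have "s = m" using sm by simp
        then show False using hi1 rkXm jk kn by simp
      qed
      have rs: "rk (2 * Suc s) = lr (w!s)" using rkX[of "Suc s"] sm' by simp
      have lok: "1 \<le> fst (w!s)" using letter_ok[of "Suc s"] sm' by simp
      have nred: "w!s \<noteq> (Suc j, True)" using red[of s] ks k1 sm' ws by (simp add: inv_letter_def)
      have nsq: "w!s \<noteq> (Suc j, False)" using sqf[of s] ks k1 sm' ws by simp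
      have j2: "1 \<le> j" and wsn: "w!s = (j, False)"
      proof -
        obtain a bb where ab: "w!s = (a,bb)" by (cases "w!s")
        have "lr (a,bb) \<ge> 2*j" "lr (a,bb) \<le> 2*Suc j" using lo1 hi1 rs ab by auto
        then have "(a,bb) = (j,False) \<and> 1 \<le> j"
          using nred nsq lok ab by (cases bb) (auto simp: lr_def)
        then show "1 \<le> j" "w!s = (j,False)" using ab by auto
      qed
      have wj: "w!(j-1) = (j,True)" using wl[of j] j2 jk by simp
      have rXj': "rk (2*j) = 2*j-1" using rXj[of j] j2 jk by simp
      have rXs: "rk (2 * Suc s) = 2*j" using rs wsn by (simp add: lr_def)
      have rYs: "rk (Suc (2 * Suc s)) = 2*j-1" using rkY[of "Suc s"] sm' wsn by (simp add: lr_def inv_letter_def)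
      have mXj0: "2*j \<in> II" "Suc (2 * Suc s) \<in> II" using j2 jk km sm' by auto
      have "sbn (X j) (Y j) (X (Suc s)) \<longleftrightarrow> sbn (X j) (Y j) (Y (Suc s))"
        using j2 jk km ks sm' by (intro lo) auto
      moreover have "X j < Y j" using ordR[OF mXj0(1) mYj] rXj' rYj[of "Suc j"] jk j2 by simp
      ultimately have nb: "\<not> sbn (X j) (Y j) (Y (Suc s))" using b by (auto simp: sbn_def)
      have "Y (Suc s) < Y j" using ordR[OF mXj0(2) mYj] rYs rYj[of "Suc j"] jk j2 by simp
      moreover have "Y (Suc s) \<noteq> X j"
      proof -
        have "Suc (2*Suc s) \<noteq> 2*j" by presburger
        then show ?thesis using mXj0 by (simp add: inj_on_eq_iff[OF injp])
      qed
      ultimately have c1: "Y (Suc s) < X j" using nb \<open>X j < Y j\<close> by (auto simp: sbn_def)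
      have mYj1: "Suc (2*(j-1)) \<in> II" using jk km by simp
      have c2: "Y (j-1) < Y (Suc s)" using ordR[OF mYj1 mXj0(2)] rYs rYj[of j] j2 jk by simp
      have "k \<le> Suc s" "Suc s \<le> m" "w!(Suc s - 1) = (j,False)" using ks sm' wsn by auto
      then show False using Suc.IH c1 c2 j2 jk by auto
    qed
  qed
  have "Y (k-1) < Y k"
    using ordR[of "Suc (2*(k-1))" "Suc (2*k)"] rYj[of k] rkY[of k] wk k1 km
    by (simp add: lr_def inv_letter_def)
  moreover have "Y k < X k"
    using ordR[of "Suc (2*k)" "2*k"] rXk rkY[of k] wk k1 km
    by (simp add: lr_def inv_letter_def)
  ultimately show False using main[of k] k1 km wk by auto
qed

lemma part2:
  assumes k1: "1 \<le> k" and nq: "n = k + q" and qm: "q < m"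
    and hw: "\<And>i. 1 \<le> i \<Longrightarrow> i \<le> q \<Longrightarrow> w!(i-1) = (n+1-i, False)"
    and hq: "w!q = (k,True)"
  shows "m = 2*q+1 \<and> (\<forall>t\<le>q. w!(q+t) = (k+t,True))"
proof -
  have rXa: "rk (2*i) = 2*(n+1-i)" if "1 \<le> i" "i \<le> q" for i
    using rkX[of i] hw[of i] that qm by (simp add: lr_def)
  have rYa: "rk (Suc (2*i)) = 2*(n+1-i) - 1" if "1 \<le> i" "i \<le> q" for i
    using rkY[of i] hw[of i] that qm by (simp add: lr_def inv_letter_def)
  define P where "P t \<longleftrightarrow> q+1+t \<le> m \<and> (\<forall>u\<le>t. w!(q+u) = (k+u,True)) \<and>
     (if t < q then X (q+1-t) < Y (q+1+t) \<and> Y (q+1+t) < Y (q-t) else X 1 < Y (q+1+t))" for t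
  have P0: "P 0"
  proof -
    have rX0: "rk (2*(q+1)) = 2*k-1" using rkX[of "q+1"] hq qm by (simp add: lr_def)
    have rY0: "rk (Suc (2*(q+1))) = 2*k" using rkY[of "q+1"] hq qm by (simp add: lr_def inv_letter_def)
    have a: "X (q+1) < Y (q+1)" using ordR[of "2*(q+1)" "Suc (2*(q+1))"] rX0 rY0 qm k1 by simp
    have b: "0 < q \<Longrightarrow> Y (q+1) < Y q"
      using ordR[of "Suc (2*(q+1))" "Suc (2*q)"] rY0 rYa[of q] qm nq by simp
    show ?thesis unfolding P_def using a b qm hq by (auto simp: numeral_2_eq_2 numeral_3_eq_3)
  qed
  have Pstep: "P (Suc t)" if Pt: "P t" and tq: "t < q" for t
  proof -
    define j where "j = k + t"
    define i where "i = q - t"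
    define s where "s = q + 1 + t"
    have i1: "1 \<le> i" "i \<le> q" and ij: "n + 1 - i = j + 1" using tq nq by (auto simp: i_def j_def)
    have sm: "s \<le> m" and ws: "\<forall>u\<le>t. w!(q+u) = (k+u,True)" and y1: "X (i+1) < Y s" and y2: "Y s < Y i"
      using Pt tq unfolding P_def i_def s_def by (auto simp: Suc_diff_le)
    have wsj: "w!(s-1) = (j,True)" using ws by (auto simp: s_def j_def)
    have "sbn (Y (Suc i - 1)) (X (Suc i)) (Y (Suc s - 1)) \<longleftrightarrow> sbn (Y (Suc i - 1)) (X (Suc i)) (X (Suc s))"
      using i1 sm qm by (intro up) (auto simp: s_def)
    then have b: "X (Suc i) < X (Suc s)" "X (Suc s) < Y i" using y1 y2 by (auto simp: sbn_def)
    have mS: "2 * Suc s \<in> II" using sm by simp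
    have mYi: "Suc (2*i) \<in> II" using i1 qm by simp
    have mXi1: "2 * Suc i \<in> II" using i1 qm by simp
    have rYi: "rk (Suc (2*i)) = 2*j+1" using rYa[of i] i1 ij by simp
    have rXi1: "2*j - 1 \<le> rk (2 * Suc i)"
    proof (cases "t = 0")
      case True
      then have "Suc i = q+1" using i_def tq by simp
      then show ?thesis using rkX[of "q+1"] hq qm True by (simp add: lr_def j_def)
    next
      case False
      then have "Suc i \<le> q" using i_def tq by simp
      then show ?thesis using rXa[of "Suc i"] ij by simp
    qed
    have lo1: "2*j-1 \<le> rk (2 * Suc s)" using ordP[OF mXi1 mS] b rXi1 by simp
    have hi1: "rk (2 * Suc s) \<le> 2*j+1" using ordP[OF mS mYi] b rYi by simp
    have jn: "j < n" using tq nq by (simp add: j_def)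
    have sm': "s < m"
    proof (rule ccontr)
      assume "\<not> s < m" then have "s = m" using sm by simp
      then show False using hi1 rkXm jn by simp
    qed
    have rs: "rk (2 * Suc s) = lr (w!s)" using rkX[of "Suc s"] sm' by simp
    have lok: "1 \<le> fst (w!s)" using letter_ok[of "Suc s"] sm' by simp
    have s1: "1 \<le> s" by (simp add: s_def)
    have nred: "w!s \<noteq> (j, False)" using red[of s] s1 sm' wsj by (simp add: inv_letter_def)
    have nsq: "w!s \<noteq> (j, True)" using sqf[of s] s1 sm' wsj by simp
    have wsn: "w!s = (Suc j, True)"
    proof -
      obtain a bb where ab: "w!s = (a,bb)" by (cases "w!s")
      have "lr (a,bb) \<ge> 2*j-1" "lr (a,bb) \<le> 2*j+1" using lo1 hi1 rs ab by auto
      then have "(a,bb) = (Suc j,True)"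
        using nred nsq lok ab by (cases bb) (auto simp: lr_def)
      then show ?thesis using ab by auto
    qed
    have rXs: "rk (2 * Suc s) = 2*j+1" using rs wsn by (simp add: lr_def)
    have rYs: "rk (Suc (2 * Suc s)) = 2*j+2" using rkY[of "Suc s"] sm' wsn by (simp add: lr_def inv_letter_def)
    have rXi: "rk (2*i) = 2*j+2" using rXa[of i] i1 ij by simp
    have mXi: "2*i \<in> II" "Suc (2 * Suc s) \<in> II" using i1 qm sm' by auto
    have "sbn (X i) (Y i) (X (Suc s)) \<longleftrightarrow> sbn (X i) (Y i) (Y (Suc s))"
      using i1 qm sm' by (intro lo) (auto simp: s_def i_def)
    moreover have yx: "Y i < X i" using ordR[OF mYi mXi(1)] rXi rYi by simp
    ultimately have nb: "\<not> sbn (X i) (Y i) (Y (Suc s))" using b by (auto simp: sbn_def)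
    have "Y i < Y (Suc s)" using ordR[OF mYi mXi(2)] rYs rYi by simp
    moreover have "Y (Suc s) \<noteq> X i"
    proof -
      have "Suc (2*Suc s) \<noteq> 2*i" by presburger
      then show ?thesis using mXi by (simp add: inj_on_eq_iff[OF injp])
    qed
    ultimately have c1: "X i < Y (Suc s)" using nb yx by (auto simp: sbn_def)
    have c2: "Suc t < q \<Longrightarrow> Y (Suc s) < Y (i - 1)"
    proof -
      assume st: "Suc t < q"
      then have ii: "1 \<le> i - 1" "i - 1 \<le> q" using i_def by auto
      have "rk (Suc (2*(i-1))) = 2*j+3" using rYa[of "i-1"] ii ij i1 by simp
      moreover have "Suc (2*(i-1)) \<in> II" using ii qm by simp
      ultimately show ?thesis using ordR[OF mXi(2)] rYs by simp
    qed
    have e1: "q + 1 - Suc t = i" "q - Suc t = i - 1" "q + 1 + Suc t = Suc s" using tq by (auto simp: i_def s_def)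
    have wnew: "\<forall>u\<le>Suc t. w!(q+u) = (k+u,True)"
    proof (intro allI impI)
      fix u assume "u \<le> Suc t"
      then consider "u \<le> t" | "u = Suc t" by linarith
      then show "w!(q+u) = (k+u,True)"
      proof cases
        case 1 then show ?thesis using ws by simp
      next
        case 2 then show ?thesis using wsn by (simp add: s_def j_def)
      qed
    qed
    have "t + 1 < q \<or> t + 1 = q" using tq by linarith
    moreover have "i = 1 \<or> t + 1 < q" using tq i_def by linarith
    ultimately show ?thesis unfolding P_def e1 using sm' c1 c2 wnew by (auto simp: s_def)
  qed
  have Pall: "t \<le> q \<Longrightarrow> P t" for t
  proof (induction t)
    case 0 then show ?case using P0 by simp
  next
    case (Suc t) then show ?case using Pstep by simp
  qed
  have Pq: "P q" using Pall by simp
  define s where "s = q + 1 + q"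
  have sm: "s \<le> m" and ws: "\<forall>u\<le>q. w!(q+u) = (k+u,True)" and y: "X 1 < Y s"
    using Pq unfolding P_def s_def by auto
  have wsn: "w!(s-1) = (n,True)" using ws nq by (auto simp: s_def)
  have "s = m"
  proof (rule ccontr)
    assume "s \<noteq> m" then have sm': "s < m" using sm by simp
    have "sbn (Y (1 - 1)) (X 1) (Y (Suc s - 1)) \<longleftrightarrow> sbn (Y (1 - 1)) (X 1) (X (Suc s))"
      using sm' by (intro up) (auto simp: s_def)
    moreover have mY0: "Suc (2*0) \<in> II" by simp
    have mX1: "2*1 \<in> II" using qm by simp
    have mS: "2 * Suc s \<in> II" using sm' by simp
    have r1: "2*n - 1 \<le> rk (2*1)"
    proof (cases "q = 0")
      case True then show ?thesis using rkX[of 1] hq qm nq by (simp add: lr_def)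
    next
      case False then show ?thesis using rXa[of 1] by simp
    qed
    have y0: "Y 0 < X 1" using ordR[OF mY0 mX1] rkY0 r1 nq k1 by simp
    have y0': "Y 0 < X (Suc s)" using ordR[OF mY0 mS] rkY0 rkX[of "Suc s"] sm' letter_ok[of "Suc s"]
      by (simp add: lr_def)
    have "X (Suc s) \<noteq> X 1" using mS mX1 by (simp add: inj_on_eq_iff[OF injp] s_def)
    ultimately have "X 1 < X (Suc s)" using y y0 y0' by (auto simp: sbn_def)
    then have lo1: "2*n-1 \<le> rk (2 * Suc s)" using ordP[OF mX1 mS] r1 by simp
    have rs: "rk (2 * Suc s) = lr (w!s)" using rkX[of "Suc s"] sm' by simp
    have lok: "1 \<le> fst (w!s) \<and> fst (w!s) \<le> n" using letter_ok[of "Suc s"] sm' by simp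
    have s1: "1 \<le> s" by (simp add: s_def)
    have nred: "w!s \<noteq> (n, False)" using red[of s] s1 sm' wsn by (simp add: inv_letter_def)
    have nsq: "w!s \<noteq> (n, True)" using sqf[of s] s1 sm' wsn by simp
    obtain a bb where ab: "w!s = (a,bb)" by (cases "w!s")
    show False using lo1 rs lok nred nsq ab by (cases bb) (auto simp: lr_def)
  qed
  then show ?thesis using ws s_def by simp
qed

end

theorem propositionA:
  fixes n k :: nat and w :: "letter list"
  assumes "free_word n w" and "planar_word n w" and "1 \<le> k" and "k \<le> n"
  shows "squarefree_word w
    \<and> \<not> (starts_with (map tbar (rev [k+1..<n+1]) @ [tt k]) w
          \<and> w \<noteq> map tbar (rev [k+1..<n+1]) @ [tt k] @ map tt [k+1..<n+1])
    \<and> \<not> starts_with (map tt [1..<k] @ [tbar k]) w"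
proof -
  obtain M \<pi> where len: "length (whitehead w) = 2*M" and
    bij: "bij_betw \<pi> {1..2*M} {1..2*M}" and
    mono: "\<forall>i\<in>{1..2*M}. \<forall>j\<in>{1..2*M}. \<pi> i < \<pi> j \<longrightarrow> sym_le n (whitehead w ! (i - 1)) (whitehead w ! (j - 1))" and
    nf1: "nested_family {1..M} (\<lambda>i. (int (\<pi> (2*i - 1)), int (\<pi> (2*i))))" and
    nf2: "nested_family {1..M-1} (\<lambda>i. (int (\<pi> (2*i)), int (\<pi> (2*i + 1))))"
    using assms(2) unfolding planar_word_def planar_tuple_def by blast
  have M: "M = length w + 1" using len whitehead_len[of w] by simp
  interpret PS n w \<pi>
    using assms(1) bij mono nf1 nf2 unfolding M by unfold_locales auto
  have i: "squarefree_word w" by (rule squarefree)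
  have ii: "\<not> (starts_with (map tbar (rev [k+1..<n+1]) @ [tt k]) w
          \<and> w \<noteq> map tbar (rev [k+1..<n+1]) @ [tt k] @ map tt [k+1..<n+1])"
  proof
    assume h: "starts_with (map tbar (rev [k+1..<n+1]) @ [tt k]) w
          \<and> w \<noteq> map tbar (rev [k+1..<n+1]) @ [tt k] @ map tt [k+1..<n+1]"
    define q where "q = n - k"
    obtain u where wu: "w = (map tbar (rev [k+1..<n+1]) @ [tt k]) @ u"
      using h unfolding starts_with_def by blast
    have lpre: "length (map tbar (rev [k+1..<n+1])) = q" using assms(4) by (simp add: q_def; arith)
    have nq: "n = k + q" using assms(4) q_def by simp
    have qm: "q < m" using wu lpre by simp
    have hq: "w!q = (k,True)" using wu lpre by (simp add: nth_append tt_def del: upt_Suc)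
    have hw: "w!(i-1) = (n+1-i, False)" if "1 \<le> i" "i \<le> q" for i
    proof -
      have lt: "i - 1 < q" using that by linarith
      have "w!(i-1) = map tbar (rev [k+1..<n+1]) ! (i-1)" using wu lpre lt by (simp add: nth_append del: upt_Suc)
      also have "\<dots> = (n+1-i, False)" using that nq by (simp add: rev_nth tbar_def del: upt_Suc)
      finally show ?thesis .
    qed
    have r: "m = 2*q+1 \<and> (\<forall>t\<le>q. w!(q+t) = (k+t,True))"
      using part2[OF assms(3) nq qm hw hq] by blast
    have "w = map tbar (rev [k+1..<n+1]) @ [tt k] @ map tt [k+1..<n+1]"
    proof (rule nth_equalityI)
      show "length w = length (map tbar (rev [k+1..<n+1]) @ [tt k] @ map tt [k+1..<n+1])"
        using r nq by (simp del: upt_Suc)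
    next
      fix x assume "x < length w"
      then have xl: "x < 2*q+1" using r by simp
      show "w!x = (map tbar (rev [k+1..<n+1]) @ [tt k] @ map tt [k+1..<n+1]) ! x"
      proof (cases "x < q")
        case True
        then show ?thesis using wu lpre by (simp add: nth_append del: upt_Suc)
      next
        case False
        define t where "t = x - q"
        have t: "x = q + t" "t \<le> q" using xl False by (auto simp: t_def)
        have "w!x = (k+t,True)" using r t by simp
        moreover have "(map tbar (rev [k+1..<n+1]) @ [tt k] @ map tt [k+1..<n+1]) ! x = (k+t,True)"
          using t lpre nq by (cases t) (simp_all add: nth_append tt_def del: upt_Suc)
        ultimately show ?thesis by simp
      qed
    qed
    then show False using h by simp
  qed
  have iii: "\<not> starts_with (map tt [1..<k] @ [tbar k]) w"
  proof
    assume "starts_with (map tt [1..<k] @ [tbar k]) w"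
    then obtain u where wu: "w = (map tt [1..<k] @ [tbar k]) @ u" unfolding starts_with_def by blast
    have km: "k \<le> m" using wu assms(3) by simp
    have wk: "w!(k-1) = (k,False)" using wu assms(3) by (simp add: nth_append tbar_def del: upt_Suc)
    have wl: "w!(i-1) = (i,True)" if "1 \<le> i" "i < k" for i
    proof -
      have "i - 1 < k - 1" using that by linarith
      then show ?thesis using wu that by (simp add: nth_append tt_def del: upt_Suc)
    qed
    show False using part3[OF assms(3) km wl wk] by blast
  qed
  show ?thesis using i ii iii by blast
qed

end
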